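(* Let $\lambda>0$, $\mu>0$ and $0<b<a<1$, and set $\mu_1=\mu$, $\mu_2=a\mu$, $\mu_3=b\mu$. Consider the continuous-time Markov chain $\{(X(t),Y(t)),t\ge 0\}$ on the state space $\{(n,i): n\in\{0,1,2,\dots\},\ i\in\{1,2,3,4\}\}$ whose only transitions are: for $n\ge 1$ and $i\in\{1,2,3\}$, $(n,i)\to(n-1,i+1)$ at rate $\mu_i$ and $(n,i)\to(n+1,i+1)$ at rate $\lambda$; for $i\in\{1,2,3\}$, $(0,i)\to(1,i+1)$ at rate $\lambda$; for $n\ge 0$, $(n,4)\to(n+2,1)$ at rate $\lambda/2$. Define $$g(\lambda)=\frac{\frac{\mu}{\lambda+\mu}+\frac{a\mu}{\lambda+a\mu}+\frac{b\mu}{\lambda+b\mu}+0\cdot\frac{2}{\lambda}}{\frac{1}{\lambda+\mu}+\frac{1}{\lambda+a\mu}+\frac{1}{\lambda+b\mu}+\frac{2}{\lambda}}.$$ If $\lambda<g(\lambda)$, then the system is stable (i.e. the chain is positive recurrent on its recurrent states).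
   Context: This models a single-server queue where $X(t)$ is the number of customers and $Y(t)$ is the server's phase (efficiency level, phase 1 being the most efficient; phases 2, 3 are working vacations with reduced service rates and phase 4 is a regular vacation with no service during which the system waits for two arrivals, modeled as a single jump of $+2$ customers at rate $\lambda/2$). *)

theory Defs
  imports "HOL-Analysis.Analysis"
begin

text \<open>q s s' is the transition rate from s to s' (only s' \<noteq> s matters).\<close>

definition total_rate :: "('s \<Rightarrow> 's \<Rightarrow> real) \<Rightarrow> 's \<Rightarrow> real" where
  "total_rate q s = infsum (\<lambda>s'. q s s') (UNIV - {s})"

definition jump_prob :: "('s \<Rightarrow> 's \<Rightarrow> real) \<Rightarrow> 's \<Rightarrow> 's \<Rightarrow> real" where
  "jump_prob q s s' = (if s' = s then 0 else q s s' / total_rate q s)"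

fun path_prob :: "('s \<Rightarrow> 's \<Rightarrow> real) \<Rightarrow> 's list \<Rightarrow> real" where
  "path_prob q (x # y # zs) = jump_prob q x y * path_prob q (y # zs)"
| "path_prob q _ = 1"

text \<open>A state s is recurrent if, started in s, the chain returns to s with probability one.
  An excursion from s is the path s # ys @ [s] with s not in ys.\<close>
definition recurrent_state :: "('s \<Rightarrow> 's \<Rightarrow> real) \<Rightarrow> 's \<Rightarrow> bool" where
  "recurrent_state q s \<longleftrightarrow>
     ((\<lambda>ys. path_prob q (s # ys @ [s])) has_sum 1) {ys. s \<notin> set ys}"

text \<open>Expected return time: the sum over excursions of their probability times the
  expected total holding time (mean holding time in x is 1 / total rate).\<close>
definition positive_recurrent_state :: "('s \<Rightarrow> 's \<Rightarrow> real) \<Rightarrow> 's \<Rightarrow> bool" where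
  "positive_recurrent_state q s \<longleftrightarrow> recurrent_state q s \<and>
     (\<lambda>ys. path_prob q (s # ys @ [s]) * (\<Sum>x\<leftarrow>s # ys. 1 / total_rate q x))
        summable_on {ys. s \<notin> set ys}"

definition stable_on :: "('s \<Rightarrow> 's \<Rightarrow> real) \<Rightarrow> 's set \<Rightarrow> bool" where
  "stable_on q S \<longleftrightarrow> (\<exists>s\<in>S. positive_recurrent_state q s) \<and>
     (\<forall>s\<in>S. recurrent_state q s \<longrightarrow> positive_recurrent_state q s)"

definition state_space :: "(nat \<times> nat) set" where
  "state_space = {(n, i). 1 \<le> i \<and> i \<le> 4}"

definition phase_rate :: "real \<Rightarrow> real \<Rightarrow> real \<Rightarrow> nat \<Rightarrow> real" where
  "phase_rate mu a b i = (if i = 1 then mu else if i = 2 then a * mu else if i = 3 then b * mu else 0)"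

definition queue_rate :: "real \<Rightarrow> real \<Rightarrow> real \<Rightarrow> real \<Rightarrow> nat \<times> nat \<Rightarrow> nat \<times> nat \<Rightarrow> real" where
  "queue_rate lam mu a b s s' = (case s of (n, i) \<Rightarrow> case s' of (m, j) \<Rightarrow>
     (if i \<in> {1, 2, 3} \<and> j = i + 1 then
        (if n \<ge> 1 \<and> m = n - 1 then phase_rate mu a b i else 0)
      + (if m = n + 1 then lam else 0)
      else 0)
   + (if i = 4 \<and> j = 1 \<and> m = n + 2 then lam / 2 else 0))"

definition g_fun :: "real \<Rightarrow> real \<Rightarrow> real \<Rightarrow> real \<Rightarrow> real" where
  "g_fun mu a b lam =
     (mu / (lam + mu) + a * mu / (lam + a * mu) + b * mu / (lam + b * mu) + 0 * (2 / lam)) /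
     (1 / (lam + mu) + 1 / (lam + a * mu) + 1 / (lam + b * mu) + 2 / lam)"

end

theory Submission
  imports Defs
begin


lemma has_sum_1I:
  fixes f :: "'a \<Rightarrow> real"
  assumes nn: "\<And>x. x \<in> A \<Longrightarrow> 0 \<le> f x"
    and ub: "\<And>F. finite F \<Longrightarrow> F \<subseteq> A \<Longrightarrow> sum f F \<le> 1"
    and lb: "\<And>e. e > 0 \<Longrightarrow> \<exists>F. finite F \<and> F \<subseteq> A \<and> 1 - e \<le> sum f F"
  shows "(f has_sum 1) A"
  unfolding has_sum_def
proof (rule order_tendstoI)
  fix a :: real assume "a < 1"
  then obtain F where F: "finite F" "F \<subseteq> A" "1 - (1 - a)/2 \<le> sum f F"
    using lb[of "(1 - a)/2"] by auto
  show "eventually (\<lambda>F. a < sum f F) (finite_subsets_at_top A)"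
    unfolding eventually_finite_subsets_at_top
  proof (intro exI conjI allI impI)
    fix Y assume Y: "finite Y \<and> F \<subseteq> Y \<and> Y \<subseteq> A"
    have "sum f F \<le> sum f Y" using Y nn by (intro sum_mono2) auto
    moreover have "a < 1 - (1 - a)/2" using \<open>a < 1\<close> by (simp add: field_simps)
    ultimately show "a < sum f Y" using F by linarith
  qed (use F in auto)
next
  fix a :: real assume "1 < a"
  show "eventually (\<lambda>F. sum f F < a) (finite_subsets_at_top A)"
    unfolding eventually_finite_subsets_at_top
    using ub \<open>1 < a\<close> by (intro exI[of _ "{}"]) force
qed

lemma sum_Cons_image: "sum g (Cons y ` T) = (\<Sum>t\<in>T. g (y # t))"
  by (subst sum.reindex) (auto simp: inj_on_def)

lemma sum_list_split:
  fixes g :: "'a list \<Rightarrow> real"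
  assumes "finite F"
  shows "sum g F = (if [] \<in> F then g [] else 0) +
     (\<Sum>y\<in>hd ` (F - {[]}). \<Sum>t\<in>{t. y # t \<in> F}. g (y # t))"
proof -
  have fin: "finite {t. y # t \<in> F}" for y
    using finite_vimageI[OF assms, of "Cons y"] by (simp add: vimage_def)
  have eq: "F - {[]} = (\<Union>y\<in>hd ` (F - {[]}). Cons y ` {t. y # t \<in> F})"
  proof (rule set_eqI, rule iffI)
    fix l assume "l \<in> F - {[]}"
    then show "l \<in> (\<Union>y\<in>hd ` (F - {[]}). Cons y ` {t. y # t \<in> F})"
      by (cases l) force+
  qed auto
  have "sum g F = (if [] \<in> F then g [] else 0) + sum g (F - {[]})"
    using assms by (simp add: sum.remove)
  also have "sum g (F - {[]}) = (\<Sum>y\<in>hd ` (F - {[]}). sum g (Cons y ` {t. y # t \<in> F}))"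
    unfolding eq[symmetric, THEN arg_cong[where f="sum g"]] 
    apply (subst eq)
    apply (rule sum.UNION_disjoint)
    using assms fin by auto
  also have "\<dots> = (\<Sum>y\<in>hd ` (F - {[]}). \<Sum>t\<in>{t. y # t \<in> F}. g (y # t))"
    by (simp add: sum_Cons_image)
  finally show ?thesis .
qed

lemma path_prob_nonneg:
  assumes "\<And>x y. 0 \<le> jump_prob q x y"
  shows "0 \<le> path_prob q l"
  by (induction l rule: induct_list012) (auto intro!: mult_nonneg_nonneg assms)

lemma path_prob_snoc:
  "l \<noteq> [] \<Longrightarrow> path_prob q (l @ [y]) = path_prob q l * jump_prob q (last l) y"
proof (induction q l rule: path_prob.induct)
  case (1 q x y zs) then show ?case by simp
next
  case ("2_1" q) then show ?case by simp
next
  case ("2_2" q v) then show ?case by simp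
qed

locale kern =
  fixes q :: "'s \<Rightarrow> 's \<Rightarrow> real" and nb :: "'s \<Rightarrow> 's set"
  assumes fin: "finite (nb x)"
    and nonneg: "0 \<le> jump_prob q x y"
    and outside: "y \<notin> nb x \<Longrightarrow> jump_prob q x y = 0"
    and substoch: "sum (jump_prob q x) (nb x) \<le> 1"
begin

abbreviation "P \<equiv> jump_prob q"

lemma sum_sub_le1: "finite B \<Longrightarrow> sum (P x) B \<le> 1"
proof -
  assume B: "finite B"
  have "sum (P x) B = sum (P x) (B \<inter> nb x)"
    using B by (intro sum.mono_neutral_right) (auto simp: outside)
  also have "\<dots> \<le> sum (P x) (nb x)" using fin by (intro sum_mono2) (auto simp: nonneg)
  finally show ?thesis using substoch[of x] by linarith
qed

lemma wsum_sub_le: "finite B \<Longrightarrow> (\<And>y. 0 \<le> W y) \<Longrightarrow>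
   (\<Sum>y\<in>B. P x y * W y) \<le> (\<Sum>y\<in>nb x. P x y * W y)"
proof -
  assume B: "finite B" and W: "\<And>y. 0 \<le> W y"
  have "(\<Sum>y\<in>B. P x y * W y) = (\<Sum>y\<in>B \<inter> nb x. P x y * W y)"
    using B by (intro sum.mono_neutral_right) (auto simp: outside)
  also have "\<dots> \<le> (\<Sum>y\<in>nb x. P x y * W y)" using fin W
    by (intro sum_mono2) (auto simp: nonneg)
  finally show ?thesis .
qed

definition supsol :: "'s set \<Rightarrow> ('s \<Rightarrow> real) \<Rightarrow> bool" where
  "supsol A W \<longleftrightarrow> (\<forall>x. 0 \<le> W x) \<and> (\<forall>x. x \<notin> A \<longrightarrow> 1 + (\<Sum>y\<in>nb x. P x y * W y) \<le> W x)"

lemma supsol_mono: "supsol A U \<Longrightarrow> A \<subseteq> B \<Longrightarrow> supsol B U"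
  unfolding supsol_def by blast

lemma supsol_edge:
  assumes U: "supsol A U" and a: "a \<in> A" and ab: "P a b > 0"
  shows "\<exists>W. supsol (insert b (A - {a})) W"
proof -
  define K where "K = max 0 ((1 + (\<Sum>y\<in>nb a. P a y * U y) - U a) / P a b)"
  define W where "W = (\<lambda>x. if x = b then 0 else U x + K)"
  have U0: "\<And>x. 0 \<le> U x" using U by (simp add: supsol_def)
  have K0: "0 \<le> K" by (simp add: K_def)
  have "(1 + (\<Sum>y\<in>nb a. P a y * U y) - U a) / P a b \<le> K" by (simp add: K_def)
  then have KP: "1 + (\<Sum>y\<in>nb a. P a y * U y) - U a \<le> K * P a b"
    using ab by (simp add: pos_divide_le_eq)
  have key: "(\<Sum>y\<in>nb x. P x y * W y) \<le> (\<Sum>y\<in>nb x. P x y * U y) + K * (1 - P x b)" for x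
  proof -
    have "(\<Sum>y\<in>nb x. P x y * W y) \<le> (\<Sum>y\<in>nb x. P x y * U y + K * P x y - (if y = b then K * P x b else 0))"
      using nonneg[of x] U0 by (intro sum_mono) (auto simp: W_def algebra_simps)
    also have "\<dots> = (\<Sum>y\<in>nb x. P x y * U y) + K * sum (P x) (nb x) - K * P x b"
      using fin[of x] outside[of b x]
      by (auto simp: sum.distrib sum_subtractf sum_distrib_left)
    also have "\<dots> \<le> (\<Sum>y\<in>nb x. P x y * U y) + K * (1 - P x b)"
      using mult_left_mono[OF substoch[of x] K0] by (simp add: algebra_simps)
    finally show ?thesis .
  qed
  have "supsol (insert b (A - {a})) W"
    unfolding supsol_def
  proof (intro conjI allI impI)
    fix x show "0 \<le> W x" using U0 K0 by (simp add: W_def)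
  next
    fix x assume x: "x \<notin> insert b (A - {a})"
    then have Wx: "W x = U x + K" by (simp add: W_def)
    show "1 + (\<Sum>y\<in>nb x. P x y * W y) \<le> W x"
    proof (cases "x \<in> A")
      case True
      then have "x = a" using x by auto
      then show ?thesis using key[of a] KP Wx by (simp add: algebra_simps)
    next
      case False
      then have "1 + (\<Sum>y\<in>nb x. P x y * U y) \<le> U x" using U by (simp add: supsol_def)
      moreover have "K * (1 - P x b) \<le> K" using K0 nonneg[of x b]
        by (simp add: algebra_simps)
      ultimately show ?thesis using key[of x] Wx by linarith
    qed
  qed
  then show ?thesis by blast
qed

definition edge :: "'s \<Rightarrow> 's \<Rightarrow> bool" where "edge x y \<longleftrightarrow> P x y > 0"

lemma supsol_reach:
  assumes "edge\<^sup>*\<^sup>* a s"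
  shows "supsol A U \<Longrightarrow> a \<in> A \<Longrightarrow> \<exists>W. supsol (insert s (A - {a})) W"
  using assms
proof (induction arbitrary: A U rule: converse_rtranclp_induct)
  case base
  then have "insert s (A - {s}) = A" by auto
  then show ?case using base by metis
next
  case (step a b)
  obtain W1 where W1: "supsol (insert b (A - {a})) W1"
    using supsol_edge[OF step.prems(1) step.prems(2)] step.hyps(1) by (auto simp: edge_def)
  obtain W where "supsol (insert s (insert b (A - {a}) - {b})) W"
    using step.IH[OF W1] by auto
  then have "supsol (insert s (A - {a})) W" by (rule supsol_mono) auto
  then show ?case by blast
qed

lemma prob_le1:
  "finite F \<Longrightarrow> \<forall>ys\<in>F. length ys < N \<Longrightarrow> \<forall>ys\<in>F. s \<notin> set ys \<Longrightarrow>
    (\<Sum>ys\<in>F. path_prob q (x # ys @ [s])) \<le> 1"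
proof (induction N arbitrary: x F)
  case 0 then have "F = {}" by auto
  then show ?case by simp
next
  case (Suc N)
  let ?H = "hd ` (F - {[]})"
  have Hs: "s \<notin> ?H"
  proof
    assume "s \<in> ?H" then obtain l where "l \<in> F" "l \<noteq> []" "s = hd l" by auto
    then show False using Suc.prems(3) hd_in_set by metis
  qed
  have finH: "finite ?H" using Suc.prems(1) by auto
  have fin: "finite {t. y # t \<in> F}" for y
    using finite_vimageI[OF Suc.prems(1), of "Cons y"] by (simp add: vimage_def)
  have "(\<Sum>ys\<in>F. path_prob q (x # ys @ [s])) = (if [] \<in> F then P x s else 0) +
     (\<Sum>y\<in>?H. \<Sum>t\<in>{t. y # t \<in> F}. P x y * path_prob q (y # t @ [s]))"
    by (subst sum_list_split[OF Suc.prems(1)]) simp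
  also have "\<dots> = (if [] \<in> F then P x s else 0) +
     (\<Sum>y\<in>?H. P x y * (\<Sum>t\<in>{t. y # t \<in> F}. path_prob q (y # t @ [s])))"
    by (simp add: sum_distrib_left)
  also have "\<dots> \<le> P x s + (\<Sum>y\<in>?H. P x y * 1)"
  proof (intro add_mono sum_mono mult_left_mono)
    fix y assume "y \<in> ?H"
    show "(\<Sum>t\<in>{t. y # t \<in> F}. path_prob q (y # t @ [s])) \<le> 1"
      using Suc.prems by (intro Suc.IH[OF fin]) auto
  qed (auto simp: nonneg)
  also have "\<dots> = sum (P x) (insert s ?H)" using Hs finH by simp
  also have "\<dots> \<le> 1" using finH by (intro sum_sub_le1) auto
  finally show ?case .
qed

lemma cost_le:
  assumes W: "supsol {s} W" and c: "\<And>x. 0 \<le> c x" "\<And>x. c x \<le> c0"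
  shows "finite F \<Longrightarrow> \<forall>ys\<in>F. length ys < N \<Longrightarrow> \<forall>ys\<in>F. s \<notin> set ys \<Longrightarrow>
    (\<Sum>ys\<in>F. path_prob q (x # ys @ [s]) * sum_list (map c (x # ys)))
      \<le> c0 * (1 + (\<Sum>y\<in>nb x. P x y * W y))"
proof (induction N arbitrary: x F)
  case 0 then have "F = {}" by auto
  have "0 \<le> c0" using c(1)[of x] c(2)[of x] by linarith
  moreover have "0 \<le> 1 + (\<Sum>y\<in>nb x. P x y * W y)" using W
    by (auto simp: supsol_def intro!: add_nonneg_nonneg sum_nonneg mult_nonneg_nonneg nonneg)
  ultimately show ?case using \<open>F = {}\<close> by simp
next
  case (Suc N)
  let ?H = "hd ` (F - {[]})"
  have W0: "\<And>y. 0 \<le> W y" using W by (simp add: supsol_def)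
  have Hs: "s \<notin> ?H"
  proof
    assume "s \<in> ?H" then obtain l where "l \<in> F" "l \<noteq> []" "s = hd l" by auto
    then show False using Suc.prems(3) hd_in_set by metis
  qed
  have finH: "finite ?H" using Suc.prems(1) by auto
  have fin: "finite {t. y # t \<in> F}" for y
    using finite_vimageI[OF Suc.prems(1), of "Cons y"] by (simp add: vimage_def)
  have c00: "0 \<le> c0" using c(1)[of x] c(2)[of x] by linarith
  have pn: "\<And>l. 0 \<le> path_prob q l" by (rule path_prob_nonneg) (rule nonneg)
  have split1: "(\<Sum>ys\<in>F. path_prob q (x # ys @ [s]) * sum_list (map c (x # ys))) =
     c x * (\<Sum>ys\<in>F. path_prob q (x # ys @ [s])) + (\<Sum>ys\<in>F. path_prob q (x # ys @ [s]) * sum_list (map c ys))"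
    by (simp add: sum_distrib_left sum.distrib algebra_simps)
  have A: "c x * (\<Sum>ys\<in>F. path_prob q (x # ys @ [s])) \<le> c0"
  proof -
    have "(\<Sum>ys\<in>F. path_prob q (x # ys @ [s])) \<le> 1" using Suc.prems by (intro prob_le1) auto
    moreover have "0 \<le> (\<Sum>ys\<in>F. path_prob q (x # ys @ [s]))" using pn by (intro sum_nonneg) auto
    ultimately show ?thesis using c(1)[of x] c(2)[of x]
      by (metis mult_le_one mult.commute mult_right_mono order_trans mult_1_left)
  qed
  have "(\<Sum>ys\<in>F. path_prob q (x # ys @ [s]) * sum_list (map c ys)) =
     (\<Sum>y\<in>?H. \<Sum>t\<in>{t. y # t \<in> F}. P x y * (path_prob q (y # t @ [s]) * sum_list (map c (y # t))))"
    by (subst sum_list_split[OF Suc.prems(1)]) (simp add: algebra_simps)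
  also have "\<dots> = (\<Sum>y\<in>?H. P x y * (\<Sum>t\<in>{t. y # t \<in> F}. path_prob q (y # t @ [s]) * sum_list (map c (y # t))))"
    by (simp add: sum_distrib_left)
  also have "\<dots> \<le> (\<Sum>y\<in>?H. P x y * (c0 * W y))"
  proof (intro sum_mono mult_left_mono)
    fix y assume y: "y \<in> ?H"
    have "(\<Sum>t\<in>{t. y # t \<in> F}. path_prob q (y # t @ [s]) * sum_list (map c (y # t)))
        \<le> c0 * (1 + (\<Sum>z\<in>nb y. P y z * W z))"
      using Suc.prems by (intro Suc.IH[OF fin]) auto
    also have "\<dots> \<le> c0 * W y" using W y Hs c00 by (auto simp: supsol_def intro!: mult_left_mono)
    finally show "(\<Sum>t\<in>{t. y # t \<in> F}. path_prob q (y # t @ [s]) * sum_list (map c (y # t))) \<le> c0 * W y" .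
  qed (auto simp: nonneg)
  also have "\<dots> = c0 * (\<Sum>y\<in>?H. P x y * W y)" by (simp add: sum_distrib_left algebra_simps)
  also have "\<dots> \<le> c0 * (\<Sum>y\<in>nb x. P x y * W y)"
    using finH W0 c00 by (intro mult_left_mono wsum_sub_le) auto
  finally show ?case using split1 A by (simp add: algebra_simps)
qed

lemma summable_exc:
  assumes W: "supsol {s} W" and c: "\<And>x. 0 \<le> c x" "\<And>x. c x \<le> c0"
  shows "(\<lambda>ys. path_prob q (s # ys @ [s]) * sum_list (map c (s # ys))) summable_on {ys. s \<notin> set ys}"
proof (rule nonneg_bdd_above_summable_on)
  have pn: "\<And>l. 0 \<le> path_prob q l" by (rule path_prob_nonneg) (rule nonneg)
  show "0 \<le> path_prob q (s # ys @ [s]) * sum_list (map c (s # ys))" for ys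
    using pn c by (intro mult_nonneg_nonneg sum_list_nonneg) auto
  show "bdd_above ((\<lambda>F. \<Sum>ys\<in>F. path_prob q (s # ys @ [s]) * sum_list (map c (s # ys))) `
          {F. F \<subseteq> {ys. s \<notin> set ys} \<and> finite F})"
  proof (rule bdd_aboveI2)
    fix F assume F: "F \<in> {F. F \<subseteq> {ys. s \<notin> set ys} \<and> finite F}"
    then have "finite (length ` F)" by auto
    then obtain N where "\<forall>k\<in>length ` F. k < N"
      using finite_nat_set_iff_bounded by blast
    then show "(\<Sum>ys\<in>F. path_prob q (s # ys @ [s]) * sum_list (map c (s # ys)))
        \<le> c0 * (1 + (\<Sum>y\<in>nb s. P s y * W y))"
      using F by (intro cost_le[OF W c]) auto
  qed
qed

fun G :: "'s \<Rightarrow> nat \<Rightarrow> 's \<Rightarrow> real" where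
  "G s 0 x = 1"
| "G s (Suc k) x = (\<Sum>y\<in>nb x - {s}. P x y * G s k y)"

fun Ls :: "'s \<Rightarrow> nat \<Rightarrow> 's \<Rightarrow> 's list set" where
  "Ls s 0 x = {}"
| "Ls s (Suc k) x = insert [] (\<Union>y\<in>nb x - {s}. Cons y ` Ls s k y)"

lemma Ls_fin: "finite (Ls s k x)"
  by (induction k arbitrary: x) (auto simp: fin)

lemma Ls_avoid: "ys \<in> Ls s k x \<Longrightarrow> s \<notin> set ys"
  by (induction k arbitrary: x ys) auto

lemma G_nonneg: "0 \<le> G s k x"
  by (induction k arbitrary: x) (auto intro!: sum_nonneg mult_nonneg_nonneg nonneg)

lemma G_Suc_le: "G s (Suc k) x \<le> G s k x"
proof (induction k arbitrary: x)
  case 0 then show ?case using sum_sub_le1[of "nb x - {s}" x] fin by simp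
next
  case (Suc k)
  have "G s (Suc (Suc k)) x \<le> (\<Sum>y\<in>nb x - {s}. P x y * G s k y)"
    unfolding G.simps(2)[of s "Suc k"] by (intro sum_mono mult_left_mono Suc.IH nonneg)
  then show ?case by simp
qed

lemma G_anti: "k \<le> m \<Longrightarrow> G s m x \<le> G s k x"
proof (induction m)
  case 0 then show ?case by simp
next
  case (Suc m)
  then show ?case using G_Suc_le[of s m x] by (cases "k = Suc m") auto
qed

lemma E_Suc: "(\<Sum>j<Suc N. G s j x) = 1 + (\<Sum>y\<in>nb x - {s}. P x y * (\<Sum>j<N. G s j y))"
proof -
  have "(\<Sum>j<Suc N. G s j x) = G s 0 x + (\<Sum>j<N. G s (Suc j) x)"
    by (rule sum.lessThan_Suc_shift)
  also have "(\<Sum>j<N. G s (Suc j) x) = (\<Sum>y\<in>nb x - {s}. P x y * (\<Sum>j<N. G s j y))"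
    by (simp add: sum_distrib_left sum.swap[of _ "{..<N}"])
  finally show ?thesis by simp
qed

lemma E_le: assumes W: "supsol {s} W"
  shows "x \<noteq> s \<Longrightarrow> (\<Sum>j<N. G s j x) \<le> W x"
proof (induction N arbitrary: x)
  case 0 then show ?case using W by (simp add: supsol_def)
next
  case (Suc N)
  have W0: "\<And>y. 0 \<le> W y" using W by (simp add: supsol_def)
  have "(\<Sum>j<Suc N. G s j x) \<le> 1 + (\<Sum>y\<in>nb x - {s}. P x y * W y)"
    unfolding E_Suc by (intro add_left_mono sum_mono mult_left_mono Suc.IH nonneg) auto
  also have "\<dots> \<le> 1 + (\<Sum>y\<in>nb x. P x y * W y)"
    using fin W0 by (intro add_left_mono wsum_sub_le) auto
  also have "\<dots> \<le> W x" using W Suc.prems by (simp add: supsol_def)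
  finally show ?case .
qed

lemma G_small: assumes W: "supsol {s} W"
  shows "G s N s \<le> (1 + (\<Sum>y\<in>nb s. P s y * W y)) / (Suc N)"
proof -
  have W0: "\<And>y. 0 \<le> W y" using W by (simp add: supsol_def)
  have "real (Suc N) * G s N s = (\<Sum>j<Suc N. G s N s)" by simp
  also have "\<dots> \<le> (\<Sum>j<Suc N. G s j s)" by (intro sum_mono G_anti) auto
  also have "\<dots> \<le> 1 + (\<Sum>y\<in>nb s - {s}. P s y * W y)"
    unfolding E_Suc using E_le[OF W] by (intro add_left_mono sum_mono mult_left_mono nonneg) auto
  also have "\<dots> \<le> 1 + (\<Sum>y\<in>nb s. P s y * W y)"
    using fin W0 by (intro add_left_mono wsum_sub_le) auto
  finally show ?thesis by (simp add: field_simps)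
qed

lemma Ls_sum:
  assumes stoch: "\<And>x. x \<in> S \<Longrightarrow> sum (P x) (nb x) = 1" "\<And>x. x \<in> S \<Longrightarrow> nb x \<subseteq> S"
  shows "x \<in> S \<Longrightarrow> (\<Sum>ys\<in>Ls s k x. path_prob q (x # ys @ [s])) = 1 - G s k x"
proof (induction k arbitrary: x)
  case 0 then show ?case by simp
next
  case (Suc k)
  have fin2: "finite (nb x - {s})" using fin by auto
  have "(\<Sum>ys\<in>Ls s (Suc k) x. path_prob q (x # ys @ [s])) =
     P x s + (\<Sum>ys\<in>(\<Union>y\<in>nb x - {s}. Cons y ` Ls s k y). path_prob q (x # ys @ [s]))"
  proof -
    have "[] \<notin> (\<Union>y\<in>nb x - {s}. Cons y ` Ls s k y)" by auto
    moreover have "finite (\<Union>y\<in>nb x - {s}. Cons y ` Ls s k y)" using fin2 Ls_fin by auto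
    ultimately show ?thesis by (simp only: Ls.simps sum.insert) simp
  qed
  also have "(\<Sum>ys\<in>(\<Union>y\<in>nb x - {s}. Cons y ` Ls s k y). path_prob q (x # ys @ [s])) =
      (\<Sum>y\<in>nb x - {s}. \<Sum>ys\<in>Cons y ` Ls s k y. path_prob q (x # ys @ [s]))"
    using fin2 Ls_fin by (intro sum.UNION_disjoint) auto
  also have "\<dots> = (\<Sum>y\<in>nb x - {s}. P x y * (\<Sum>t\<in>Ls s k y. path_prob q (y # t @ [s])))"
    by (simp only: sum_Cons_image sum_distrib_left) simp
  also have "\<dots> = (\<Sum>y\<in>nb x - {s}. P x y * (1 - G s k y))"
  proof (rule sum.cong[OF refl])
    fix y assume "y \<in> nb x - {s}"
    then have "y \<in> S" using stoch(2)[OF Suc.prems] by auto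
    then show "P x y * (\<Sum>t\<in>Ls s k y. path_prob q (y # t @ [s])) = P x y * (1 - G s k y)"
      using Suc.IH[of y] by simp
  qed
  also have "\<dots> = sum (P x) (nb x - {s}) - (\<Sum>y\<in>nb x - {s}. P x y * G s k y)"
    by (simp only: right_diff_distrib mult_1_right sum_subtractf)
  also have "\<dots> = sum (P x) (nb x - {s}) - G s (Suc k) x"
    by (simp only: G.simps)
  finally have eq: "(\<Sum>ys\<in>Ls s (Suc k) x. path_prob q (x # ys @ [s])) =
      P x s + sum (P x) (nb x - {s}) - G s (Suc k) x" by simp
  have "P x s + sum (P x) (nb x - {s}) = 1"
  proof (cases "s \<in> nb x")
    case True then show ?thesis using stoch(1)[OF Suc.prems] fin by (simp add: sum.remove)
  next
    case False then show ?thesis using stoch(1)[OF Suc.prems] outside by simp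
  qed
  then show ?case using eq by simp
qed

lemma recurrent_from_supsol:
  assumes W: "supsol {s} W" and sS: "s \<in> S"
    and stoch: "\<And>x. x \<in> S \<Longrightarrow> sum (P x) (nb x) = 1" "\<And>x. x \<in> S \<Longrightarrow> nb x \<subseteq> S"
  shows "((\<lambda>ys. path_prob q (s # ys @ [s])) has_sum 1) {ys. s \<notin> set ys}"
proof (rule has_sum_1I)
  have pn: "\<And>l. 0 \<le> path_prob q l" by (rule path_prob_nonneg) (rule nonneg)
  show "0 \<le> path_prob q (s # ys @ [s])" for ys by (rule pn)
  show "sum (\<lambda>ys. path_prob q (s # ys @ [s])) F \<le> 1" if F: "finite F" "F \<subseteq> {ys. s \<notin> set ys}" for F
  proof -
    have "finite (length ` F)" using F by auto
    then obtain N where "\<forall>k\<in>length ` F. k < N"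
      using finite_nat_set_iff_bounded by blast
    then show ?thesis using F by (intro prob_le1) auto
  qed
  fix e :: real assume e: "e > 0"
  define B where "B = 1 + (\<Sum>y\<in>nb s. P s y * W y)"
  obtain N :: nat where N: "B / e < N" using reals_Archimedean2 by blast
  have GN: "G s N s \<le> B / real (Suc N)" using G_small[OF W] unfolding B_def .
  have "B < real N * e" using N e by (simp add: pos_divide_less_eq)
  then have "B \<le> e * real (Suc N)" using e by (simp add: algebra_simps)
  then have "B / real (Suc N) \<le> e" by (simp add: pos_divide_le_eq)
  moreover have "(\<Sum>ys\<in>Ls s N s. path_prob q (s # ys @ [s])) = 1 - G s N s"
    by (rule Ls_sum[OF stoch sS])
  ultimately have "1 - e \<le> (\<Sum>ys\<in>Ls s N s. path_prob q (s # ys @ [s]))"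
    using GN by linarith
  moreover have "Ls s N s \<subseteq> {ys. s \<notin> set ys}" using Ls_avoid[of _ s N s] by blast
  ultimately show "\<exists>F. finite F \<and> F \<subseteq> {ys. s \<notin> set ys} \<and> 1 - e \<le> sum (\<lambda>ys. path_prob q (s # ys @ [s])) F"
    using Ls_fin[of s N s] by blast
qed

end



definition nbq :: "nat \<times> nat \<Rightarrow> (nat \<times> nat) set" where
  "nbq x = (case x of (n, i) \<Rightarrow> if i \<in> {1,2,3} then {(n - 1, i + 1), (n + 1, i + 1)}
      else if i = 4 then {(n + 2, 1)} else {})"

definition TR :: "real \<Rightarrow> real \<Rightarrow> real \<Rightarrow> real \<Rightarrow> nat \<times> nat \<Rightarrow> real" where
  "TR lam mu a b x = (case x of (n, i) \<Rightarrow> if i \<in> {1,2,3} then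
      (if n \<ge> 1 then lam + phase_rate mu a b i else lam) else if i = 4 then lam / 2 else 0)"

definition Pq :: "real \<Rightarrow> real \<Rightarrow> real \<Rightarrow> real \<Rightarrow> nat \<times> nat \<Rightarrow> nat \<times> nat \<Rightarrow> real" where
  "Pq lam mu a b x y = (case x of (n, i) \<Rightarrow> case y of (m, j) \<Rightarrow>
     if i \<in> {1,2,3} \<and> j = i + 1 then
       (if n \<ge> 1 then (if m = n - 1 then phase_rate mu a b i / (lam + phase_rate mu a b i)
          else if m = n + 1 then lam / (lam + phase_rate mu a b i) else 0)
        else (if m = 1 then 1 else 0))
     else if i = 4 \<and> j = 1 \<and> m = n + 2 then 1 else 0)"

lemma q_outside: "y \<notin> nbq x \<Longrightarrow> queue_rate lam mu a b x y = 0"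
  by (cases x; cases y) (auto simp: nbq_def queue_rate_def)

lemma not_self: "x \<notin> nbq x"
  by (cases x) (auto simp: nbq_def)

lemma fin_nbq: "finite (nbq x)"
  by (cases x) (auto simp: nbq_def)

lemma total_rate_eq: "total_rate (queue_rate lam mu a b) x = TR lam mu a b x"
proof -
  have "total_rate (queue_rate lam mu a b) x = infsum (queue_rate lam mu a b x) (nbq x)"
    unfolding total_rate_def
    by (rule infsum_cong_neutral) (use not_self q_outside in auto)
  also have "\<dots> = sum (queue_rate lam mu a b x) (nbq x)" using fin_nbq by simp
  also have "\<dots> = TR lam mu a b x"
  proof (cases x)
    case (Pair n i)
    show ?thesis
    proof (cases "i \<in> {1,2,3}")
      case True
      have ne: "(n - 1, i + 1) \<noteq> (n + 1, i + 1)" by auto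
      show ?thesis using True ne unfolding Pair
        by (auto simp: nbq_def TR_def queue_rate_def)
    next
      case False
      then show ?thesis unfolding Pair
        by (auto simp: nbq_def TR_def queue_rate_def)
    qed
  qed
  finally show ?thesis .
qed

lemma jump_eq:
  assumes "lam > 0" "mu > 0" "a > 0" "b > 0"
  shows "jump_prob (queue_rate lam mu a b) x y = Pq lam mu a b x y"
proof -
  have pr: "phase_rate mu a b i \<ge> 0" for i using assms by (auto simp: phase_rate_def)
  show ?thesis
  proof (cases x; cases y)
    fix n i m j assume x: "x = (n, i)" and y: "y = (m, j)"
    show ?thesis
    proof (cases "y = x")
      case True then show ?thesis using x y by (auto simp: jump_prob_def Pq_def)
    next
      case False
      then have "jump_prob (queue_rate lam mu a b) x y = queue_rate lam mu a b x y / TR lam mu a b x"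
        by (simp add: jump_prob_def total_rate_eq)
      also have "\<dots> = Pq lam mu a b x y"
        using assms pr[of i] unfolding x y
        by (auto simp: queue_rate_def TR_def Pq_def)
      finally show ?thesis .
    qed
  qed
qed


lemma PF:
  assumes "lam > 0" "\<And>i. phase_rate mu a b i \<ge> 0"
  shows "(\<Sum>y\<in>nbq (n, i). Pq lam mu a b (n, i) y * f y) =
   (if i \<in> {1,2,3} then (if n \<ge> 1 then phase_rate mu a b i / (lam + phase_rate mu a b i) * f (n - 1, i + 1)
        + lam / (lam + phase_rate mu a b i) * f (n + 1, i + 1) else f (1, i + 1))
    else if i = 4 then f (n + 2, 1) else 0)"
proof (cases "i \<in> {1,2,3}")
  case True
  have ne: "(n - 1, i + 1) \<noteq> (n + 1, i + 1)" by auto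
  show ?thesis using True ne by (cases n) (auto simp: nbq_def Pq_def)
next
  case False
  then show ?thesis by (auto simp: nbq_def Pq_def)
qed

locale qsys =
  fixes lam mu a b :: real
  assumes lam: "lam > 0" and mu: "mu > 0" and b0: "0 < b" and ba: "b < a" and a1: "a < 1"
    and stab: "lam < g_fun mu a b lam"
begin

abbreviation "pr \<equiv> phase_rate mu a b"
abbreviation "qq \<equiv> queue_rate lam mu a b"

lemma a0: "a > 0" using b0 ba by linarith

lemma pr_pos: "i \<in> {1,2,3} \<Longrightarrow> pr i > 0"
  using mu a0 b0 by (auto simp: phase_rate_def)

lemma pr_nn: "pr i \<ge> 0"
  using mu a0 b0 by (auto simp: phase_rate_def)

lemma jq: "jump_prob qq x y = Pq lam mu a b x y"
  using jump_eq[OF lam mu a0 b0] .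

lemma PF': "(\<Sum>y\<in>nbq (n, i). jump_prob qq (n, i) y * f y) =
   (if i \<in> {1,2,3} then (if n \<ge> 1 then pr i / (lam + pr i) * f (n - 1, i + 1)
        + lam / (lam + pr i) * f (n + 1, i + 1) else f (1, i + 1))
    else if i = 4 then f (n + 2, 1) else 0)"
  unfolding jq using PF[OF lam pr_nn] .

lemma psum: "pr i / (lam + pr i) = 1 - lam / (lam + pr i)"
proof -
  have "lam + pr i > 0" using lam pr_nn[of i] by linarith
  then show ?thesis by (simp add: field_simps)
qed

lemma sumP: "sum (jump_prob qq (n, i)) (nbq (n, i)) = (if i \<in> {1,2,3,4} then 1 else 0)"
  using PF'[of n i "\<lambda>_. 1"] psum[of i] by auto

lemma Pnn: "0 \<le> jump_prob qq x y"
  using lam pr_nn by (cases x; cases y) (auto simp: jq Pq_def intro!: divide_nonneg_nonneg)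

sublocale K: kern qq nbq
proof
  show "finite (nbq x)" for x by (rule fin_nbq)
  show "0 \<le> jump_prob qq x y" for x y by (rule Pnn)
  show "y \<notin> nbq x \<Longrightarrow> jump_prob qq x y = 0" for x y
    by (simp add: jump_prob_def q_outside)
  show "sum (jump_prob qq x) (nbq x) \<le> 1" for x
    by (cases x) (simp add: sumP)
qed


definition u :: "nat \<Rightarrow> real" where "u i = lam / (lam + pr i)"
definition Ssum :: real where "Ssum = u 1 + u 2 + u 3"

lemma u_bounds: "0 \<le> u i" "u i \<le> 1"
  using lam pr_nn[of i] by (auto simp: u_def divide_le_eq)

lemma Ssum_lt: "Ssum < 1/2"
proof -
  have d1: "lam + mu > 0" "lam + a * mu > 0" "lam + b * mu > 0"
    using lam mu a0 b0 by (auto intro: add_pos_pos)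
  have S0: "0 \<le> Ssum" using u_bounds by (simp add: Ssum_def)
  have u1: "u 1 = lam / (lam + mu)" "u 2 = lam / (lam + a * mu)" "u 3 = lam / (lam + b * mu)"
    by (auto simp: u_def phase_rate_def)
  have n1: "mu / (lam + mu) = 1 - u 1" "a * mu / (lam + a * mu) = 1 - u 2" "b * mu / (lam + b * mu) = 1 - u 3"
    using d1 by (auto simp: u_def phase_rate_def field_simps)
  have r1: "1 / (lam + mu) = u 1 / lam" "1 / (lam + a * mu) = u 2 / lam" "1 / (lam + b * mu) = u 3 / lam"
  proof -
    have m1: "lam * lam + lam * mu > 0" "lam * lam + a * (lam * mu) > 0" "lam * lam + b * (lam * mu) > 0"
      using lam mu a0 b0 by (auto intro!: add_pos_pos mult_pos_pos)
    show "1 / (lam + mu) = u 1 / lam" "1 / (lam + a * mu) = u 2 / lam" "1 / (lam + b * mu) = u 3 / lam"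
      using d1 lam m1 by (auto simp: u_def phase_rate_def field_simps)
  qed
  have g: "g_fun mu a b lam = (3 - Ssum) / ((Ssum + 2) / lam)"
    unfolding g_fun_def n1 r1 Ssum_def using lam by (simp add: field_simps)
  have "lam < (3 - Ssum) / ((Ssum + 2) / lam)" using stab g by simp
  also have "\<dots> = lam * (3 - Ssum) / (Ssum + 2)" using lam by (simp add: field_simps)
  finally have "lam * (Ssum + 2) < lam * (3 - Ssum)" using S0 by (simp add: pos_less_divide_eq)
  then have "Ssum + 2 < 3 - Ssum" using lam by simp
  then show ?thesis by simp
qed

definition al :: real where "al = 4 / (1 - 2 * Ssum)"

lemma al_pos: "al > 0" and al_eq: "al * (1 - 2 * Ssum) = 4"
proof -
  have "1 - 2 * Ssum > 0" using Ssum_lt by simp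
  then show "al > 0" by (simp add: al_def)
  show "al * (1 - 2 * Ssum) = 4" unfolding al_def using \<open>1 - 2 * Ssum > 0\<close> by (simp add: field_simps)
qed

definition be :: "nat \<Rightarrow> real" where
  "be i = (if i = 1 then 4 + 3 * al
     else if i = 2 then 3 + 3 * al - al * (2 * u 1 - 1)
     else if i = 3 then 2 + 3 * al - al * (2 * u 1 - 1) - al * (2 * u 2 - 1)
     else if i = 4 then 1 + 3 * al - al * (2 * u 1 - 1) - al * (2 * u 2 - 1) - al * (2 * u 3 - 1)
     else 1)"

lemma be_step: "i \<in> {1,2,3} \<Longrightarrow> be (i + 1) = be i - 1 - al * (2 * u i - 1)"
  by (auto simp: be_def)

lemma be_ge1: "be i \<ge> 1"
proof -
  have h: "al * (2 * u j - 1) \<le> al" for j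
    using al_pos u_bounds[of j] by (simp add: mult_left_le)
  have e1: "be 1 = 4 + 3 * al" by (simp add: be_def)
  have e2: "be 2 = 3 + 3 * al - al * (2 * u 1 - 1)" by (simp add: be_def)
  have e3: "be 3 = 2 + 3 * al - al * (2 * u 1 - 1) - al * (2 * u 2 - 1)" by (simp add: be_def)
  have e4: "be 4 = 1 + 3 * al - al * (2 * u 1 - 1) - al * (2 * u 2 - 1) - al * (2 * u 3 - 1)"
    by (simp add: be_def)
  have e5: "i \<notin> {1,2,3,4} \<Longrightarrow> be i = 1" by (simp add: be_def)
  have "i = 1 \<or> i = 2 \<or> i = 3 \<or> i = 4 \<or> i \<notin> {1,2,3,4}" by auto
  then show ?thesis
  proof (elim disjE)
    assume i: "i = 1" show ?thesis unfolding i using e1 al_pos by linarith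
  next
    assume i: "i = 2" show ?thesis unfolding i using e2 h[of 1] al_pos by linarith
  next
    assume i: "i = 3" show ?thesis unfolding i using e3 h[of 1] h[of 2] al_pos by linarith
  next
    assume i: "i = 4" show ?thesis unfolding i using e4 h[of 1] h[of 2] h[of 3] al_pos by linarith
  next
    assume i: "i \<notin> {1,2,3,4}" show ?thesis using e5[OF i] by simp
  qed
qed

definition U :: "nat \<times> nat \<Rightarrow> real" where
  "U x = (case x of (n, i) \<Rightarrow> if i \<in> {1,2,3,4} then al * n + be i else 1)"

definition C :: "(nat \<times> nat) set" where "C = {(0,1),(0,2),(0,3)}"

lemma U_nn: "0 \<le> U x"
proof -
  have "0 \<le> al * real n + be i" for n i
    using al_pos be_ge1[of i] by (smt (verit) mult_nonneg_nonneg of_nat_0_le_iff)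
  then show ?thesis by (cases x) (auto simp: U_def)
qed

lemma U_sup: "K.supsol C U"
  unfolding K.supsol_def
proof (intro conjI allI impI)
  fix x show "0 \<le> U x" by (rule U_nn)
next
  fix x assume xC: "x \<notin> C"
  obtain n i where x: "x = (n, i)" by (cases x)
  show "1 + (\<Sum>y\<in>nbq x. jump_prob qq x y * U y) \<le> U x"
  proof (cases "i \<in> {1,2,3}")
    case True
    then have n1: "n \<ge> 1" using xC x by (cases n) (auto simp: C_def)
    have i1: "i + 1 \<in> {1,2,3,4}" using True by auto
    have "1 + (\<Sum>y\<in>nbq x. jump_prob qq x y * U y) =
        1 + (1 - u i) * (al * real (n - 1) + be (i + 1)) + u i * (al * real (n + 1) + be (i + 1))"
      unfolding x PF' using True n1 i1 by (simp add: U_def psum u_def)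
    also have "\<dots> = al * n + be i"
      using n1 be_step[OF True] by (simp add: of_nat_diff algebra_simps)
    also have "\<dots> = U x" using True by (auto simp: U_def x)
    finally show ?thesis by simp
  next
    case False
    show ?thesis
    proof (cases "i = 4")
      case True
      have "1 + (\<Sum>y\<in>nbq x. jump_prob qq x y * U y) = 1 + al * real (n + 2) + be 1"
        unfolding x PF' using True by (simp add: U_def)
      also have "\<dots> \<le> al * n + be 4"
        using al_eq by (simp add: be_def Ssum_def algebra_simps)
      also have "\<dots> = U x" using True by (auto simp: U_def x)
      finally show ?thesis .
    next
      case False
      then show ?thesis using \<open>i \<notin> {1,2,3}\<close> unfolding x PF' by (simp add: U_def)
    qed
  qed
qed


lemma up: "i \<in> {1,2,3} \<Longrightarrow> K.edge (n, i) (n + 1, i + 1)"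
  using lam pr_nn[of i] by (cases n) (auto simp: K.edge_def jq Pq_def)

lemma down: "i \<in> {1,2,3} \<Longrightarrow> n \<ge> 1 \<Longrightarrow> K.edge (n, i) (n - 1, i + 1)"
  using lam pr_pos[of i] by (auto simp: K.edge_def jq Pq_def)

lemma four: "K.edge (n, 4) (n + 2, 1)"
  by (auto simp: K.edge_def jq Pq_def)

lemma r1: assumes "n \<ge> 1" shows "K.edge\<^sup>*\<^sup>* (n, 1) (n + 1, 1)"
proof -
  have e1: "K.edge (n, 1) (n + 1, 2)" using up[of 1 n] by (simp add: eval_nat_numeral)
  have e2: "K.edge (n + 1, 2) (n, 3)" using down[of 2 "n + 1"] by (simp add: eval_nat_numeral)
  have e3: "K.edge (n, 3) (n - 1, 4)" using down[of 3 n] assms by (simp add: eval_nat_numeral)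
  have "n - 1 + 2 = n + 1" using assms by simp
  then have e4: "K.edge (n - 1, 4) (n + 1, 1)" using four[of "n - 1"] by simp
  show ?thesis by (meson e1 e2 e3 e4 converse_rtranclp_into_rtranclp rtranclp.rtrancl_refl)
qed

lemma r2: "K.edge\<^sup>*\<^sup>* (2, 1) (k + 2, 1)"
proof (induction k)
  case 0 then show ?case by (simp add: eval_nat_numeral)
next
  case (Suc k)
  have "K.edge\<^sup>*\<^sup>* (k + 2, 1) (k + 2 + 1, 1)" by (rule r1) simp
  then show ?case using Suc by simp
qed

definition Z :: "(nat \<times> nat) set" where "Z = {(0,1),(1,1),(0,2)}"

lemma rR: assumes "x \<in> state_space" "x \<notin> Z" shows "K.edge\<^sup>*\<^sup>* (2, 1) x"
proof -
  obtain n i where x: "x = (n, i)" by (cases x)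
  have n1: "K.edge\<^sup>*\<^sup>* (2, 1) (n, 1)" if "n \<ge> 2" for n
  proof -
    have "n - 2 + 2 = n" using that by simp
    then show ?thesis using r2[of "n - 2"] by metis
  qed
  have n2: "n \<ge> 1 \<Longrightarrow> K.edge\<^sup>*\<^sup>* (2, 1) (n, 2)" for n
    using n1[of "n + 1"] down[of 1 "n + 1"] by (simp add: eval_nat_numeral rtranclp.rtrancl_into_rtrancl)
  have n3: "K.edge\<^sup>*\<^sup>* (2, 1) (n, 3)" for n
    using n2[of "n + 1"] down[of 2 "n + 1"] by (simp add: eval_nat_numeral rtranclp.rtrancl_into_rtrancl)
  have n4: "K.edge\<^sup>*\<^sup>* (2, 1) (n, 4)" for n
    using n3[of "n + 1"] down[of 3 "n + 1"] by (simp add: eval_nat_numeral rtranclp.rtrancl_into_rtrancl)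
  have "i = 1 \<and> n \<ge> 2 \<or> i = 2 \<and> n \<ge> 1 \<or> i = 3 \<or> i = 4"
    using assms unfolding x by (auto simp: state_space_def Z_def)
  then show ?thesis unfolding x using n1 n2 n3 n4 by (elim disjE conjE) simp_all
qed

lemma rC: "K.edge\<^sup>*\<^sup>* (0, 1) (2, 1)" "K.edge\<^sup>*\<^sup>* (0, 2) (2, 1)" "K.edge\<^sup>*\<^sup>* (0, 3) (2, 1)"
proof -
  have a1: "K.edge (0, 1) (1, 2)" using up[of 1 0] by (simp add: eval_nat_numeral)
  have a2: "K.edge (1, 2) (0, 3)" using down[of 2 1] by (simp add: eval_nat_numeral)
  have a3: "K.edge (0, 3) (1, 4)" using up[of 3 0] by (simp add: eval_nat_numeral)
  have a4: "K.edge (1, 4) (3, 1)" using four[of 1] by (simp add: eval_nat_numeral)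
  have a5: "K.edge (3, 1) (2, 2)" using down[of 1 3] by (simp add: eval_nat_numeral)
  have a6: "K.edge (2, 2) (1, 3)" using down[of 2 2] by (simp add: eval_nat_numeral)
  have a7: "K.edge (1, 3) (0, 4)" using down[of 3 1] by (simp add: eval_nat_numeral)
  have a8: "K.edge (0, 4) (2, 1)" using four[of 0] by (simp add: eval_nat_numeral)
  have a9: "K.edge (0, 2) (1, 3)" using up[of 2 0] by (simp add: eval_nat_numeral)
  show "K.edge\<^sup>*\<^sup>* (0, 3) (2, 1)"
    by (meson a3 a4 a5 a6 a7 a8 converse_rtranclp_into_rtranclp rtranclp.rtrancl_refl)
  then show "K.edge\<^sup>*\<^sup>* (0, 1) (2, 1)"
    by (meson a1 a2 converse_rtranclp_into_rtranclp)
  show "K.edge\<^sup>*\<^sup>* (0, 2) (2, 1)"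
    by (meson a9 a7 a8 converse_rtranclp_into_rtranclp rtranclp.rtrancl_refl)
qed

lemma sup_s: assumes "s \<in> state_space" "s \<notin> Z" shows "\<exists>W. K.supsol {s} W"
proof -
  have R: "K.edge\<^sup>*\<^sup>* c s" if "c \<in> C" for c
    using that rC rR[OF assms] by (auto simp: C_def intro: rtranclp_trans)
  have c1: "(0,1) \<in> C" and c2: "(0,2) \<in> C" and c3: "(0,3) \<in> C" by (auto simp: C_def)
  obtain W1 where W1: "K.supsol (insert s (C - {(0,1)})) W1"
    using K.supsol_reach[OF R[OF c1] U_sup c1] by blast
  have m2: "(0,2) \<in> insert s (C - {(0,1)})" by (auto simp: C_def)
  obtain W2 where W2: "K.supsol (insert s (insert s (C - {(0,1)}) - {(0,2)})) W2"
    using K.supsol_reach[OF R[OF c2] W1 m2] by blast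
  have m3: "(0,3) \<in> insert s (insert s (C - {(0,1)}) - {(0,2)})" by (auto simp: C_def)
  obtain W3 where W3: "K.supsol (insert s (insert s (insert s (C - {(0,1)}) - {(0,2)}) - {(0,3)})) W3"
    using K.supsol_reach[OF R[OF c3] W2 m3] by blast
  have "K.supsol {s} W3" by (rule K.supsol_mono[OF W3]) (auto simp: C_def)
  then show ?thesis by blast
qed

lemma into_zero: "(\<And>z. jump_prob qq z t = 0) \<Longrightarrow> l \<noteq> [] \<Longrightarrow> path_prob qq (l @ [t]) = 0"
  by (simp add: path_prob_snoc)

lemma pz1: "n < 2 \<Longrightarrow> jump_prob qq z (n, 1) = 0"
  by (cases z) (auto simp: jq Pq_def)

lemma pz2: "z \<noteq> (1, 1) \<Longrightarrow> jump_prob qq z (0, 2) = 0"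
  by (cases z) (auto simp: jq Pq_def)

lemma exc_zero: assumes "s \<in> Z" shows "path_prob qq (s # ys @ [s]) = 0"
proof -
  have eq: "s # ys @ [s] = (s # ys) @ [s]" by simp
  show ?thesis
  proof (cases "s = (0, 2)")
    case False
    then obtain n where "s = (n, 1)" "n < 2" using assms by (auto simp: Z_def)
    then have "\<And>z. jump_prob qq z s = 0" using pz1 by simp
    then show ?thesis unfolding eq by (rule into_zero) simp
  next
    case True
    have pe: "path_prob qq (s # ys @ [s]) = path_prob qq (s # ys) * jump_prob qq (last (s # ys)) s"
      unfolding eq by (rule path_prob_snoc) simp
    show ?thesis
    proof (cases "last (s # ys) = (1, 1)")
      case False then show ?thesis using pe True pz2 by simp
    next
      case L: True
      then have "ys \<noteq> []" using True by auto
      then obtain ys' where ys: "ys = ys' @ [(1, 1)]" using L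
        by (metis append_butlast_last_id last_ConsR)
      have "path_prob qq (s # ys) = 0" unfolding ys
        using into_zero[of "(1, 1)" "s # ys'"] pz1[of 1] by simp
      then show ?thesis using pe by simp
    qed
  qed
qed

lemma cost: "0 \<le> 1 / total_rate qq x" "1 / total_rate qq x \<le> 2 / lam"
proof -
  have T: "TR lam mu a b x = 0 \<or> TR lam mu a b x \<ge> lam / 2"
    using lam pr_nn by (cases x) (auto simp: TR_def)
  have T0: "TR lam mu a b x \<ge> 0" using T lam by auto
  show "0 \<le> 1 / total_rate qq x" using T0 by (simp add: total_rate_eq)
  show "1 / total_rate qq x \<le> 2 / lam"
  proof (cases "TR lam mu a b x = 0")
    case True then show ?thesis using lam by (simp add: total_rate_eq)
  next
    case False
    then have "TR lam mu a b x \<ge> lam / 2" using T by auto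
    then have "1 / TR lam mu a b x \<le> 1 / (lam / 2)" using lam
      by (intro divide_left_mono) auto
    then show ?thesis by (simp add: total_rate_eq)
  qed
qed

lemma stoch: "x \<in> state_space \<Longrightarrow> sum (jump_prob qq x) (nbq x) = 1"
  "x \<in> state_space \<Longrightarrow> nbq x \<subseteq> state_space"
   apply (cases x, simp add: sumP state_space_def)
  apply (cases x, auto simp: state_space_def nbq_def split: if_splits)
  done

theorem stable: "stable_on qq state_space"
proof -
  have summ: "(\<lambda>ys. path_prob qq (s # ys @ [s]) * (\<Sum>x\<leftarrow>s # ys. 1 / total_rate qq x))
      summable_on {ys. s \<notin> set ys}" if s: "s \<in> state_space" for s
  proof (cases "s \<in> Z")
    case True then show ?thesis by (intro summable_on_0) (simp add: exc_zero)
  next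
    case False
    then obtain W where W: "K.supsol {s} W" using sup_s s by blast
    show ?thesis by (rule K.summable_exc[OF W cost])
  qed
  have s0: "(2, 1) \<in> state_space" "(2::nat, 1::nat) \<notin> Z" by (auto simp: state_space_def Z_def)
  obtain W where W: "K.supsol {(2, 1)} W" using sup_s[OF s0] by blast
  have "recurrent_state qq (2, 1)" unfolding recurrent_state_def
    by (rule K.recurrent_from_supsol[OF W s0(1) stoch])
  then show ?thesis unfolding stable_on_def positive_recurrent_state_def
    using summ s0 by blast
qed

end


theorem theorem1:
  fixes lam mu a b :: real
  assumes "lam > 0" and "mu > 0" and "0 < b" and "b < a" and "a < 1"
    and "lam < g_fun mu a b lam"
  shows "stable_on (queue_rate lam mu a b) state_space"
proof -
  interpret qsys lam mu a b using assms by unfold_locales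
  show ?thesis by (rule stable)
qed

end
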